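(* Let $p \geq 2$ be an integer and let $U_p=\bigcup_{n\in 2\mathbb Z_+}\mathbb Z_p^n$. Let $\boldsymbol a,\boldsymbol b\in U_p$ be equivalent (in the sense defined in the context). Then $\tau_p(\boldsymbol a)=\tau_p(\boldsymbol b)$.
   Context: $\mathbb Z_+$ denotes the positive integers and $\mathbb Z_p=\mathbb Z/p\mathbb Z$. Two elements of $U_p$ are called equivalent if they are related by a finite sequence of the following transformations of $(a_1,\ldots,a_n)\in\mathbb Z_p^n$ ($n$ even): (Op1) $(a_1,\ldots,a_n)\to(a_2,\ldots,a_n,a_1)$; (Op2) $(a_1,\ldots,a_n)\to(a, a_2+(-1)^2(a_1-a),\ldots,a_i+(-1)^i(a_1-a),\ldots,a_n+(-1)^n(a_1-a))$ for any $a\in\mathbb Z_p$; (Op3) $(a_1,\ldots,a_n)\to(a, a_1-a_2+a,\ldots,a_1-a_i+a,\ldots,a_1-a_n+a)$ for any $a\in\mathbb Z_p$; (Op4) $(a_1,\ldots,a_n)\to(a_1,-a_1+a_2+a_3,a_3,\ldots,a_n)$ when $n>3$. For $\boldsymbol a=(a_1,\ldots,a_n)\in U_p$, $\tau_p(\boldsymbol a)$ is the maximum of all $k\in\{1,\ldots,p\}$ such that $k\mid p$ and $a_1+a_2\equiv a_2+a_3\equiv\cdots\equiv a_{n-1}+a_n\equiv a_n+a_1 \pmod k$ (congruence mod $k$ is well defined on $\mathbb Z_p$ since $k\mid p$). *)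

theory Defs
  imports Main
begin

text \<open>Elements of Z_p^n are represented as lists of integers with entries in {0..<p};
  all operations reduce modulo p. Positions are 1-based in the paper, 0-based here.\<close>

definition U :: "int \<Rightarrow> int list set" where
  "U p = {xs. xs \<noteq> [] \<and> even (length xs) \<and> (\<forall>x\<in>set xs. 0 \<le> x \<and> x < p)}"

definition op1 :: "int list \<Rightarrow> int list" where
  "op1 xs = tl xs @ [hd xs]"

definition op2 :: "int \<Rightarrow> int \<Rightarrow> int list \<Rightarrow> int list" where
  "op2 p a xs = map (\<lambda>i. if i = 0 then a mod p
       else (xs ! i + (-1) ^ (i + 1) * (xs ! 0 - a)) mod p) [0..<length xs]"

definition op3 :: "int \<Rightarrow> int \<Rightarrow> int list \<Rightarrow> int list" where
  "op3 p a xs = map (\<lambda>i. if i = 0 then a mod p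
       else (xs ! 0 - xs ! i + a) mod p) [0..<length xs]"

definition op4 :: "int \<Rightarrow> int list \<Rightarrow> int list" where
  "op4 p xs = xs[1 := (- xs ! 0 + xs ! 1 + xs ! 2) mod p]"

inductive step :: "int \<Rightarrow> int list \<Rightarrow> int list \<Rightarrow> bool" for p where
  s1: "step p xs (op1 xs)"
| s2: "step p xs (op2 p a xs)"
| s3: "step p xs (op3 p a xs)"
| s4: "length xs > 3 \<Longrightarrow> step p xs (op4 p xs)"

definition equiv_Up :: "int \<Rightarrow> int list \<Rightarrow> int list \<Rightarrow> bool" where
  "equiv_Up p xs ys = (\<lambda>u v. step p u v \<or> step p v u)\<^sup>*\<^sup>* xs ys"

definition sums_cong :: "int \<Rightarrow> int list \<Rightarrow> bool" where
  "sums_cong k xs = (\<forall>i < length xs. \<forall>j < length xs.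
     (xs ! i + xs ! ((i + 1) mod length xs)) mod k = (xs ! j + xs ! ((j + 1) mod length xs)) mod k)"

definition tau :: "int \<Rightarrow> int list \<Rightarrow> int" where
  "tau p xs = Max {k. 1 \<le> k \<and> k \<le> p \<and> k dvd p \<and> sums_cong k xs}"

end

theory Submission
  imports Defs
begin

definition cs :: "int list \<Rightarrow> nat \<Rightarrow> int" where
  "cs xs i = xs ! i + xs ! ((i+1) mod length xs)"

lemma sc_def2: "sums_cong k xs = (\<forall>i<length xs. \<forall>j<length xs. cs xs i mod k = cs xs j mod k)"
  by (simp add: sums_cong_def cs_def)

lemma sc_alt:
  assumes "1 < length xs"
  shows "sums_cong k xs = (\<forall>i<length xs. k dvd (cs xs i - cs xs 1))"
proof
  assume "sums_cong k xs"
  then show "\<forall>i<length xs. k dvd (cs xs i - cs xs 1)"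
    using assms by (simp add: sc_def2 mod_eq_dvd_iff)
next
  assume H: "\<forall>i<length xs. k dvd (cs xs i - cs xs 1)"
  show "sums_cong k xs" unfolding sc_def2
  proof (intro allI impI)
    fix i j assume "i < length xs" "j < length xs"
    have a: "k dvd (cs xs i - cs xs 1)" using H \<open>i < length xs\<close> by blast
    have b: "k dvd (cs xs j - cs xs 1)" using H \<open>j < length xs\<close> by blast
    have "k dvd (cs xs i - cs xs 1) - (cs xs j - cs xs 1)" using dvd_diff[OF a b] .
    then have "k dvd (cs xs i - cs xs j)" by simp
    then show "cs xs i mod k = cs xs j mod k" by (simp add: mod_eq_dvd_iff)
  qed
qed

lemma sc_pointwise:
  assumes "length v = length u"
    and "\<forall>i<length u. cs v i mod k = (c + s * cs u i) mod k" and "s = 1 \<or> s = -1"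
  shows "sums_cong k u = sums_cong k v"
proof -
  have "cs u i mod k = cs u j mod k \<longleftrightarrow> cs v i mod k = cs v j mod k"
    if "i < length u" "j < length u" for i j
  proof -
    have "cs v i mod k = cs v j mod k \<longleftrightarrow> (c + s * cs u i) mod k = (c + s * cs u j) mod k"
      using assms that by simp
    also have "\<dots> \<longleftrightarrow> k dvd (s * (cs u i - cs u j))"
      by (simp add: mod_eq_dvd_iff algebra_simps)
    also have "\<dots> \<longleftrightarrow> k dvd (cs u i - cs u j)"
      using assms(3) by (metis dvd_minus_iff mult_1 mult_minus_left)
    finally show ?thesis by (simp add: mod_eq_dvd_iff)
  qed
  then show ?thesis using assms(1) by (auto simp: sc_def2)
qed

lemma op1_nth:
  assumes "xs \<noteq> []" "i < length xs"
  shows "op1 xs ! i = xs ! ((i+1) mod length xs)"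
proof (cases "i + 1 < length xs")
  case True
  then show ?thesis using assms by (cases xs) (auto simp: op1_def nth_append)
next
  case False
  then have "i + 1 = length xs" using assms by simp
  then show ?thesis using assms by (cases xs) (auto simp: op1_def nth_append)
qed

lemma op1_sc:
  assumes "xs \<noteq> []"
  shows "sums_cong k (op1 xs) = sums_cong k xs"
proof -
  let ?n = "length xs"
  have len: "length (op1 xs) = ?n" using assms by (simp add: op1_def)
  have n0: "?n > 0" using assms by simp
  have c: "cs (op1 xs) i = cs xs ((i+1) mod ?n)" if "i < ?n" for i
  proof -
    have "(i + 1) mod ?n < ?n" using n0 by simp
    moreover have "((i + 1) mod ?n + 1) mod ?n = (i + 2) mod ?n"
      by (simp only: Suc_eq_plus1[symmetric] add_2_eq_Suc' mod_Suc_eq)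
    moreover have "(i+1) mod ?n < ?n" using n0 by simp
    ultimately show ?thesis using that assms n0
      by (simp add: cs_def len op1_nth)
  qed
  have surj: "\<exists>i'<?n. (i'+1) mod ?n = i" if "i < ?n" for i
  proof (cases i)
    case 0 then show ?thesis using n0 by (intro exI[of _ "?n - 1"]) auto
  next
    case (Suc m) then show ?thesis using that by (intro exI[of _ m]) auto
  qed
  show ?thesis
  proof
    assume A: "sums_cong k (op1 xs)"
    have A': "\<forall>i<?n. \<forall>j<?n. cs (op1 xs) i mod k = cs (op1 xs) j mod k"
      using A unfolding sc_def2 len .
    show "sums_cong k xs" unfolding sc_def2
    proof (intro allI impI)
      fix i j assume "i < ?n" "j < ?n"
      then obtain i' j' where i': "i' < ?n" "(i'+1) mod ?n = i" and j': "j' < ?n" "(j'+1) mod ?n = j"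
        using surj by blast
      have "cs (op1 xs) i' mod k = cs (op1 xs) j' mod k"
        using A' i'(1) j'(1) by blast
      then show "cs xs i mod k = cs xs j mod k" using i' j' c[OF i'(1)] c[OF j'(1)] by simp
    qed
  next
    assume A: "sums_cong k xs"
    show "sums_cong k (op1 xs)" unfolding sc_def2 len
    proof (intro allI impI)
      fix i j assume i: "i < ?n" and j: "j < ?n"
      have "(i+1) mod ?n < ?n" "(j+1) mod ?n < ?n" using n0 by auto
      then have "cs xs ((i+1) mod ?n) mod k = cs xs ((j+1) mod ?n) mod k"
        using A unfolding sc_def2 by blast
      then show "cs (op1 xs) i mod k = cs (op1 xs) j mod k" using c[OF i] c[OF j] by simp
    qed
  qed
qed

lemma op2_nth_mod:
  assumes "k dvd p" "i < length xs"
  shows "op2 p a xs ! i mod k = (xs!i + (-1)^(i+1) * (xs!0 - a)) mod k"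
  using assms by (cases "i = 0") (simp_all add: op2_def mod_mod_cancel)

lemma op2_sc:
  assumes "k dvd p" "even (length xs)" "xs \<noteq> []"
  shows "sums_cong k xs = sums_cong k (op2 p a xs)"
proof (rule sc_pointwise[where c = 0 and s = 1])
  let ?n = "length xs"
  let ?v = "op2 p a xs"
  let ?d = "xs!0 - a"
  show "length ?v = ?n" by (simp add: op2_def)
  show "\<forall>i<?n. cs ?v i mod k = (0 + 1 * cs xs i) mod k"
  proof (intro allI impI)
    fix i assume i: "i < ?n"
    let ?j = "(i+1) mod ?n"
    have j: "?j < ?n" using assms(3) by simp
    have e: "(-1::int)^(i+1) + (-1)^(?j+1) = 0"
    proof (cases "i + 1 < ?n")
      case True then show ?thesis by simp
    next
      case False
      then have "i + 1 = ?n" using i by simp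
      then show ?thesis using assms(2) by simp
    qed
    have "cs ?v i mod k = (?v!i mod k + ?v!?j mod k) mod k"
      by (simp add: cs_def op2_def mod_add_eq)
    also have "\<dots> = ((xs!i + (-1)^(i+1) * ?d) mod k + (xs!?j + (-1)^(?j+1) * ?d) mod k) mod k"
      using op2_nth_mod[OF assms(1) i] op2_nth_mod[OF assms(1) j] by simp
    also have "\<dots> = (xs!i + xs!?j + ((-1)^(i+1) + (-1)^(?j+1)) * ?d) mod k"
      by (simp add: mod_add_eq algebra_simps)
    also have "\<dots> = cs xs i mod k" using e by (simp add: cs_def)
    finally show "cs ?v i mod k = (0 + 1 * cs xs i) mod k" by simp
  qed
qed simp

lemma op3_nth_mod:
  assumes "k dvd p" "i < length xs"
  shows "op3 p a xs ! i mod k = (xs!0 - xs!i + a) mod k"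
  using assms by (cases "i = 0") (simp_all add: op3_def mod_mod_cancel)

lemma op3_sc:
  assumes "k dvd p" "xs \<noteq> []"
  shows "sums_cong k xs = sums_cong k (op3 p a xs)"
proof (rule sc_pointwise[where c = "2 * (xs!0 + a)" and s = "-1"])
  let ?n = "length xs"
  let ?v = "op3 p a xs"
  show "length ?v = ?n" by (simp add: op3_def)
  show "\<forall>i<?n. cs ?v i mod k = (2 * (xs!0 + a) + -1 * cs xs i) mod k"
  proof (intro allI impI)
    fix i assume i: "i < ?n"
    let ?j = "(i+1) mod ?n"
    have j: "?j < ?n" using assms(2) by simp
    have "cs ?v i mod k = (?v!i mod k + ?v!?j mod k) mod k"
      by (simp add: cs_def op3_def mod_add_eq)
    also have "\<dots> = ((xs!0 - xs!i + a) mod k + (xs!0 - xs!?j + a) mod k) mod k"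
      using op3_nth_mod[OF assms(1) i] op3_nth_mod[OF assms(1) j] by simp
    also have "\<dots> = (xs!0 - xs!i + a + (xs!0 - xs!?j + a)) mod k"
      by (simp add: mod_add_eq)
    also have "\<dots> = (2 * (xs!0 + a) + -1 * cs xs i) mod k"
      by (simp add: cs_def algebra_simps)
    finally show "cs ?v i mod k = (2 * (xs!0 + a) + -1 * cs xs i) mod k" .
  qed
qed simp


lemma dvd3: "(k::int) dvd x \<Longrightarrow> k dvd y \<Longrightarrow> k dvd z \<Longrightarrow> k dvd (x + y - z)"
  by (simp add: dvd_add dvd_diff)

lemma op4_sc:
  assumes "k dvd p" "length xs > 3"
  shows "sums_cong k xs = sums_cong k (op4 p xs)"
proof -
  let ?n = "length xs"
  let ?v = "op4 p xs"
  define w where "w = - xs ! 0 + xs ! 1 + xs ! 2"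
  define D where "D = w mod p - w"
  have lenv: "length ?v = ?n" by (simp add: op4_def)
  have v1: "?v ! 1 = w mod p" using assms(2) by (simp add: op4_def w_def)
  have v1': "?v ! Suc 0 = w mod p" using v1 by simp
  have vi: "?v ! j = xs ! j" if "j \<noteq> 1" for j using that by (simp add: op4_def)
  have kD: "k dvd D"
  proof -
    have "(w mod p) mod k = w mod k" using assms(1) by (simp add: mod_mod_cancel)
    then show ?thesis unfolding D_def by (simp add: mod_eq_dvd_iff)
  qed
  have e0: "cs ?v 0 = cs xs 1 + D"
    using assms(2) by (simp add: cs_def lenv v1' vi D_def w_def numeral_2_eq_2)
  have e1: "cs ?v 1 = 2 * cs xs 1 - cs xs 0 + D"
  proof -
    have "cs ?v 1 = w mod p + xs ! 2" using assms(2) by (simp add: cs_def lenv v1' vi numeral_2_eq_2)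
    moreover have "cs xs 1 = xs!1 + xs!2" "cs xs 0 = xs!0 + xs!1" using assms(2) by (simp_all add: cs_def numeral_2_eq_2)
    ultimately show ?thesis by (simp add: D_def w_def)
  qed
  have ei: "cs ?v i = cs xs i" if "2 \<le> i" "i < ?n" for i
  proof -
    have "(i+1) mod ?n \<noteq> 1"
    proof (cases "i + 1 < ?n")
      case True then show ?thesis using that by simp
    next
      case False then have "i + 1 = ?n" using that by simp
      then show ?thesis using assms(2) by simp
    qed
    then show ?thesis using that by (simp add: cs_def lenv vi)
  qed
  have n1: "1 < ?n" "1 < length ?v" using assms(2) lenv by auto
  show ?thesis
  proof
    assume "sums_cong k xs"
    then have H: "\<forall>i<?n. k dvd (cs xs i - cs xs 1)" using sc_alt[OF n1(1)] by blast
    have "k dvd (cs ?v i - cs ?v 1)" if i: "i < ?n" for i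
    proof -
      consider "i = 0" | "i = 1" | "2 \<le> i" by linarith
      then show ?thesis
      proof cases
        case 1
        have "cs ?v i - cs ?v 1 = - (cs xs 1 - cs xs 0)" using 1 e0 e1 by simp
        moreover have "k dvd cs xs 0 - cs xs 1" using H n1(1) by (metis less_trans zero_less_one)
        ultimately show ?thesis by simp
      next
        case 2 then show ?thesis by simp
      next
        case 3
        have "cs ?v i - cs ?v 1 = (cs xs i - cs xs 1) + (cs xs 0 - cs xs 1) - D"
          using ei[OF 3 i] e1 by simp
        then show ?thesis using H i n1 kD dvd3 by (metis zero_less_numeral less_trans numeral_One zero_less_one)
      qed
    qed
    then show "sums_cong k ?v" using sc_alt[OF n1(2)] lenv by simp
  next
    assume "sums_cong k ?v"
    then have H: "\<forall>i<?n. k dvd (cs ?v i - cs ?v 1)" using sc_alt[OF n1(2)] lenv by simp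
    have "k dvd (cs xs i - cs xs 1)" if i: "i < ?n" for i
    proof -
      consider "i = 0" | "i = 1" | "2 \<le> i" by linarith
      then show ?thesis
      proof cases
        case 1
        have "cs xs i - cs xs 1 = cs ?v 0 - cs ?v 1" using 1 e0 e1 by simp
        moreover have "k dvd cs ?v 0 - cs ?v 1" using H n1(1) by (metis less_trans zero_less_one)
        ultimately show ?thesis by simp
      next
        case 2 then show ?thesis by simp
      next
        case 3
        have "cs xs i - cs xs 1 = (cs ?v i - cs ?v 1) + D - (cs ?v 0 - cs ?v 1)"
          using ei[OF 3 i] e0 by simp
        moreover have "k dvd (cs ?v i - cs ?v 1)" "k dvd (cs ?v 0 - cs ?v 1)" using H i n1(1) by (auto, metis less_trans zero_less_one)
        ultimately show ?thesis using kD dvd3 by metis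
      qed
    qed
    then show "sums_cong k xs" using sc_alt[OF n1(1)] by simp
  qed
qed

lemma step_fwd:
  assumes "step p u v" "even (length u)" "2 \<le> length u"
  shows "length v = length u \<and> (\<forall>k. k dvd p \<longrightarrow> (sums_cong k u = sums_cong k v))"
  using assms
proof (induction rule: step.induct)
  case (s1 xs)
  then have ne: "xs \<noteq> []" by auto
  have "length (op1 xs) = length xs" using ne by (simp add: op1_def)
  then show ?case using op1_sc[OF ne] by blast
next
  case (s2 xs a)
  then have ne: "xs \<noteq> []" by auto
  have "length (op2 p a xs) = length xs" by (simp add: op2_def)
  then show ?case using op2_sc[OF _ s2(1) ne] by blast
next
  case (s3 xs a)
  then have ne: "xs \<noteq> []" by auto
  have "length (op3 p a xs) = length xs" by (simp add: op3_def)
  then show ?case using op3_sc[OF _ ne] by blast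
next
  case (s4 xs)
  have "length (op4 p xs) = length xs" by (simp add: op4_def)
  then show ?case using op4_sc[OF _ s4(1)] by blast
qed

lemma step_bwd:
  assumes "step p u v" "2 \<le> length v"
  shows "length u = length v"
  using assms
proof (induction rule: step.induct)
  case (s1 xs)
  then show ?case by (cases xs) (auto simp: op1_def)
qed (auto simp: op2_def op3_def op4_def)

theorem mainTheorem1:
  fixes p :: int and a b :: "int list"
  assumes "p \<ge> 2"
    and "a \<in> U p" and "b \<in> U p"
    and "equiv_Up p a b"
  shows "tau p a = tau p b"
proof -
  have ea0: "even (length a)" "0 < length a" using assms(2) unfolding U_def by auto
  then have ea: "even (length a)" "2 \<le> length a" by presburger+
  have "(\<lambda>u v. step p u v \<or> step p v u)\<^sup>*\<^sup>* a b" using assms(4) by (simp add: equiv_Up_def)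
  then have "length b = length a \<and> (\<forall>k. k dvd p \<longrightarrow> (sums_cong k b = sums_cong k a))"
  proof (induction rule: rtranclp_induct)
    case base then show ?case by simp
  next
    case (step y z)
    then have ly: "length y = length a" and IH: "\<forall>k. k dvd p \<longrightarrow> (sums_cong k y = sums_cong k a)"
      by auto
    from step(2) show ?case
    proof
      assume "step p y z"
      then show ?thesis using step_fwd[of p y z] ly IH ea by auto
    next
      assume st: "step p z y"
      then have "length z = length y" using step_bwd ly ea by auto
      then show ?thesis using step_fwd[OF st] ly IH ea by auto
    qed
  qed
  then have "{k. 1 \<le> k \<and> k \<le> p \<and> k dvd p \<and> sums_cong k a} = {k. 1 \<le> k \<and> k \<le> p \<and> k dvd p \<and> sums_cong k b}"
    by auto
  then show ?thesis by (simp add: tau_def)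
qed

end
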